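(* Suppose Assumptions (A1) and (A2) below hold and that $C > C^*$. Then for every nonempty $\mathscr{S} \in \mathcal{A}(k)$, $$\left| \inf_{T \in \mathcal{T}^{1/2}_{\mathscr{S}}} \sup_{\tau \in \mathrm{Lip}_C(\mathbb{R}^d)} \mathcal{R}(T,\mathscr{S},\tau) \;-\; \frac{C}{2}\,\frac{1}{\#\mathcal{S}_P} \sum_{s \in \mathcal{S}_P \setminus \mathscr{S}} \|X_s - X_{N_{\mathscr{S}}(s)}\| \right| \;\le\; B\,\sigma_E\,\frac{\min\{\#(\mathcal{S}_E \cap \mathcal{S}_P),\, k\}}{\#\mathcal{S}_P}.$$
   Context: Sites are indexed by $\mathcal{S}=\{1,\dots,S\}$. $\mathcal{S}_E\subseteq\mathcal{S}$ (experimental sites) has $\mathrm{card}(\mathcal{S}_E)\ge 2$, and $\mathcal{S}_P\subseteq\mathcal{S}$ (policy sites) is nonempty, with $\#\mathcal{S}_P=\mathrm{card}(\mathcal{S}_P)$; the two sets may overlap. Each site $s$ has a covariate vector $X_s\in\mathbb{R}^d$ and a known standard deviation $\sigma_s>0$. $\|\cdot\|$ is the Euclidean norm, and $\mathrm{Lip}_C(\mathbb{R}^d)$ is the set of functions $\tau:\mathbb{R}^d\to\mathbb{R}$ with $|\tau(x)-\tau(x')|\le C\|x-x'\|$ for all $x,x'$, where $C>0$ is known. (A1): the true conditional treatment effect function $\tau$ lies in $\mathrm{Lip}_C(\mathbb{R}^d)$. (A2): $X_s\neq X_{s'}$ for all $s\neq s'$ in $\mathcal{S}$. Fix an integer $1\le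 k<\mathrm{card}(\mathcal{S}_E)$ and set $\mathcal{A}(k)=\{\mathscr{S}\subset\mathcal{S}_E:\mathrm{card}(\mathscr{S})\le k\}$. For a nonempty $\mathscr{S}\in\mathcal{A}(k)$ with elements $\mathscr{S}_1<\dots<\mathscr{S}_m$, the data are $\hat\tau_{\mathscr{S}}=(\hat\tau_{\mathscr{S}_1},\dots,\hat\tau_{\mathscr{S}_m})^\top\sim\mathcal{N}_m(\tau_{\mathscr{S}},\Sigma_{\mathscr{S}})$, where $\tau_{\mathscr{S}}=(\tau(X_{\mathscr{S}_1}),\dots,\tau(X_{\mathscr{S}_m}))^\top$ and $\Sigma_{\mathscr{S}}=\mathrm{diag}(\sigma^2_{\mathscr{S}_1},\dots,\sigma^2_{\mathscr{S}_m})$. A treatment rule is a measurable map $T:\mathbb{R}^m\to[0,1]^{\#\mathcal{S}_P}$ with components $T_s$, $s\in\mathcal{S}_P$. $\mathcal{T}^{1/2}_{\mathscr{S}}$ is the set of treatment rules such that, for every positive definite diagonal matrix $\Sigma$ and every $s\in\mathcal{S}_P$, $\mathbb{E}[T_s(U)]=1/2$ when $U\sim\mathcal{N}_m(0,\Sigma)$. Regret is $\mathcal{R}(T,\mathscr{S},\tau)=\frac{1}{\#\mathcal{S}_P}\sum_{s\in\mathcal{S}_P}\tau(X_s)\big(\mathbf{1}\{\tau(X_s)\ge0\}-\mathbb{E}_{\tau_{\mathscr{S}}}[T_s(\hat\tau_{\mathscr{S}})]\big)$, where the expectation is taken under $\hat\tau_{\mathscr{S}}\sim\mathcal{N}(\tau_{\mathscr{S}},\Sigma_{\mathscr{S}})$.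 For $s\in\mathcal{S}_P$, $N_{\mathscr{S}}(s)\in\mathscr{S}$ is a nearest neighbor of $s$ in $\mathscr{S}$: $\|X_s-X_{N_{\mathscr{S}}(s)}\|\le\|X_s-X_{s'}\|$ for all $s'\in\mathscr{S}$, taking the smallest index when there are ties. $C^*=\max\{\sqrt{\pi/2}\,\sigma_{N_{\mathscr{S}}(s)}/\|X_s-X_{N_{\mathscr{S}}(s)}\| : \mathscr{S}\in\mathcal{A}(k)\text{ nonempty},\ s\in\mathcal{S}_P\setminus\mathscr{S}\}$. $\sigma_E=\max_{s\in\mathcal{S}_E}\sigma_s$. $B=\arg\max_{z\ge0} z\,\Phi(-z)$, where $\Phi$ is the standard normal CDF. *)

theory Defs
  imports "HOL-Probability.Probability"
begin

text \<open>Data vectors in R^m (m = card of the selected set Ss) are represented as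
  functions indexed by the sites in Ss (extensional functions on Ss).\<close>

definition gauss_data :: "nat set \<Rightarrow> (nat \<Rightarrow> real) \<Rightarrow> (nat \<Rightarrow> real) \<Rightarrow> (nat \<Rightarrow> real) measure" where
  "gauss_data Ss mu sig = PiM Ss (\<lambda>i. density lborel (normal_density (mu i) (sig i)))"

definition treatment_rules :: "nat set \<Rightarrow> nat set \<Rightarrow> (nat \<Rightarrow> (nat \<Rightarrow> real) \<Rightarrow> real) set" where
  "treatment_rules Ss SP = {T. \<forall>s\<in>SP. T s \<in> borel_measurable (PiM Ss (\<lambda>_. borel))
                                   \<and> (\<forall>u. 0 \<le> T s u \<and> T s u \<le> 1)}"

definition half_rules :: "nat set \<Rightarrow> nat set \<Rightarrow> (nat \<Rightarrow> (nat \<Rightarrow> real) \<Rightarrow> real) set" where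
  "half_rules Ss SP = {T \<in> treatment_rules Ss SP.
      \<forall>sig. (\<forall>i\<in>Ss. 0 < sig i) \<longrightarrow>
        (\<forall>s\<in>SP. integral\<^sup>L (gauss_data Ss (\<lambda>_. 0) sig) (T s) = 1/2)}"

definition regret :: "(nat \<Rightarrow> 'a) \<Rightarrow> (nat \<Rightarrow> real) \<Rightarrow> nat set \<Rightarrow>
    (nat \<Rightarrow> (nat \<Rightarrow> real) \<Rightarrow> real) \<Rightarrow> nat set \<Rightarrow> ('a \<Rightarrow> real) \<Rightarrow> real" where
  "regret X sig SP T Ss tau =
     (1 / real (card SP)) * (\<Sum>s\<in>SP. tau (X s) *
        ((if tau (X s) \<ge> 0 then 1 else 0)
         - integral\<^sup>L (gauss_data Ss (\<lambda>i. tau (X i)) sig) (T s)))"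

definition nn :: "(nat \<Rightarrow> 'a::real_normed_vector) \<Rightarrow> nat set \<Rightarrow> nat \<Rightarrow> nat" where
  "nn X Ss s = (LEAST j. j \<in> Ss \<and> (\<forall>j'\<in>Ss. norm (X s - X j) \<le> norm (X s - X j')))"

definition A_k :: "nat set \<Rightarrow> nat \<Rightarrow> nat set set" where
  "A_k SE k = {Ss. Ss \<subseteq> SE \<and> card Ss \<le> k}"

definition Cstar :: "(nat \<Rightarrow> 'a::real_normed_vector) \<Rightarrow> (nat \<Rightarrow> real) \<Rightarrow> nat set \<Rightarrow> nat set \<Rightarrow> nat \<Rightarrow> real" where
  "Cstar X sig SE SP k = Max {sqrt (pi/2) * sig (nn X Ss s) / norm (X s - X (nn X Ss s)) | Ss s.
       Ss \<in> A_k SE k \<and> Ss \<noteq> {} \<and> s \<in> SP - Ss}"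

definition Phi :: "real \<Rightarrow> real" where
  "Phi x = measure (density lborel std_normal_density) {..x}"

definition B_const :: real where
  "B_const = (SOME z. z \<ge> 0 \<and> (\<forall>w\<ge>0. w * Phi (-w) \<le> z * Phi (-z)))"

end

theory Submission
  imports Defs
begin


abbreviation SN :: "real measure" where "SN \<equiv> density lborel std_normal_density"

lemma SN_prob: "prob_space SN"
  by (rule prob_space_normal_density) simp

lemma NN_prob: "0 < s \<Longrightarrow> prob_space (density lborel (normal_density m s))"
  by (rule prob_space_normal_density)

lemma SN_real_distribution: "real_distribution SN"
  unfolding real_distribution_def real_distribution_axioms_def using SN_prob by simp

lemma Phi_cdf: "Phi = cdf SN"
  by (rule ext) (simp add: Phi_def cdf_def)

lemma Phi_nonneg: "0 \<le> Phi x"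
  by (simp add: Phi_def)

lemma Phi_le1: "Phi x \<le> 1"
  unfolding Phi_def using prob_space.prob_le_1[OF SN_prob] by simp

lemma Phi_mono: "x \<le> y \<Longrightarrow> Phi x \<le> Phi y"
  unfolding Phi_cdf using real_distribution.finite_borel_measure_M[OF SN_real_distribution]
  by (simp add: finite_borel_measure.cdf_nondecreasing)

lemma Phi_ennreal: "ennreal (Phi x) = emeasure SN {..x}"
proof -
  interpret SN: prob_space SN by (rule SN_prob)
  show ?thesis unfolding Phi_def by (simp add: SN.emeasure_eq_measure)
qed

lemma emeasure_NN_atMost:
  assumes s: "0 < s"
  shows "emeasure (density lborel (normal_density m s)) {..y} = ennreal (Phi ((y - m) / s))"
proof -
  have "emeasure (density lborel (normal_density m s)) {..y}
      = (\<integral>\<^sup>+x. ennreal (normal_density m s x) * indicator {..y} x \<partial>lborel)"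
    by (simp add: emeasure_density)
  also have "\<dots> = ennreal \<bar>s\<bar> * (\<integral>\<^sup>+x. ennreal (normal_density m s (m + s * x)) * indicator {..y} (m + s * x) \<partial>lborel)"
    using s by (subst nn_integral_real_affine[where c=s and t=m]) auto
  also have "\<dots> = (\<integral>\<^sup>+x. ennreal (std_normal_density x) * indicator {..(y - m) / s} x \<partial>lborel)"
  proof -
    have eq: "s * normal_density m s (m + s * x) = std_normal_density x" for x
      using s by (simp add: normal_density_def real_sqrt_mult power_mult_distrib field_simps)
    have ind: "indicator {..y} (m + s * x) = (indicator {..(y - m) / s} x :: ennreal)" for x
      using s by (auto simp: indicator_def pos_le_divide_eq algebra_simps)
    show ?thesis
      using s by (subst nn_integral_cmult[symmetric])
        (auto intro!: nn_integral_cong simp: ind eq[symmetric] ennreal_mult' mult.assoc)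
  qed
  also have "\<dots> = emeasure SN {..(y - m) / s}"
    by (simp add: emeasure_density)
  finally show ?thesis by (simp add: Phi_ennreal)
qed

lemma measure_NN_atMost:
  assumes s: "0 < s"
  shows "measure (density lborel (normal_density m s)) {..y} = Phi ((y - m) / s)"
  using emeasure_NN_atMost[OF s, of m y] Phi_nonneg
  by (simp add: measure_def)

lemma SN_singleton_null: "{x} \<in> null_sets SN"
  apply (subst null_sets_density_iff)
   apply simp
  apply (simp only: sets_lborel)
  apply (rule conjI)
   apply simp
  apply (rule eventually_mono[OF AE_lborel_singleton[of x]])
  apply simp
  done

lemma Phi_neg: "Phi (- x) = 1 - Phi x"
proof -
  have "emeasure SN {..-x} = (\<integral>\<^sup>+t. ennreal (std_normal_density t) * indicator {..-x} t \<partial>lborel)"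
    by (simp add: emeasure_density)
  also have "\<dots> = ennreal \<bar>-1\<bar> * (\<integral>\<^sup>+t. ennreal (std_normal_density (0 + -1 * t)) * indicator {..-x} (0 + -1 * t) \<partial>lborel)"
    by (subst nn_integral_real_affine[where c="-1" and t=0]) auto
  also have "\<dots> = (\<integral>\<^sup>+t. ennreal (std_normal_density t) * indicator {x..} t \<partial>lborel)"
    by (auto intro!: nn_integral_cong simp: indicator_def std_normal_density_def)
  also have "\<dots> = emeasure SN {x..}"
    by (simp add: emeasure_density)
  finally have 1: "Phi (-x) = measure SN {x..}"
    unfolding Phi_def by (simp add: measure_def)
  have "measure SN {x..} = 1 - measure SN (space SN - {x..})"
    using prob_space.prob_compl[OF SN_prob, of "{x..}"] by simp
  also have "space SN - {x..} = {..<x}" by auto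
  also have "measure SN {..<x} = measure SN ({..<x} \<union> {x})"
    by (rule measure_Un_null_set[symmetric]) (auto simp: SN_singleton_null)
  also have "{..<x} \<union> {x} = {..x}" by auto
  finally show ?thesis using 1 by (simp add: Phi_def)
qed

lemma Phi_0: "Phi 0 = 1/2"
  using Phi_neg[of 0] by simp



lemma measure_SN_set: "A \<in> sets borel \<Longrightarrow> measure SN A = (LBINT t:A. std_normal_density t)"
proof -
  assume A: "A \<in> sets borel"
  interpret SN: prob_space SN by (rule SN_prob)
  have "measure SN A = integral\<^sup>L SN (indicator A)"
    using A by (simp add: SN.emeasure_eq_measure)
  also have "\<dots> = integral\<^sup>L lborel (\<lambda>x. std_normal_density x *\<^sub>R indicator A x)"
    using A by (subst integral_density) auto
  also have "\<dots> = (LBINT t:A. std_normal_density t)"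
    by (simp add: set_lebesgue_integral_def mult.commute)
  finally show ?thesis .
qed

lemma Phi_split: assumes "a \<le> u" shows "Phi u = Phi a + (LBINT t=a..u. std_normal_density t)"
proof (cases "a = u")
  case True then show ?thesis by simp
next
  case False
  with assms have au: "a < u" by simp
  have "Phi u - Phi a = measure SN {a<..u}"
    unfolding Phi_cdf
    using finite_borel_measure.cdf_diff_eq[OF real_distribution.finite_borel_measure_M[OF SN_real_distribution] au] .
  also have "\<dots> = (LBINT t:{a<..u}. std_normal_density t)"
    by (rule measure_SN_set) simp
  also have "\<dots> = (LBINT t=a..u. std_normal_density t)"
    using assms by (simp add: interval_integral_Ioc)
  finally show ?thesis by simp
qed

lemma continuous_std: "continuous_on A std_normal_density"
  unfolding std_normal_density_def by (intro continuous_intros) auto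

lemma DERIV_Phi: "(Phi has_real_derivative std_normal_density x) (at x)"
proof -
  let ?I = "\<lambda>u. LBINT t=(x-1)..u. std_normal_density t"
  let ?G = "\<lambda>u. Phi (x - 1) + ?I u"
  have "(?I has_vector_derivative std_normal_density x) (at x within {x-1..x+1})"
    apply (rule interval_integral_FTC2)
        apply simp
       apply simp
      apply (rule continuous_std)
     apply simp
    apply simp
    done
  then have "(?I has_real_derivative std_normal_density x) (at x)"
    by (simp add: has_real_derivative_iff_has_vector_derivative at_within_Icc_at)
  then have G: "(?G has_real_derivative std_normal_density x) (at x)"
    using DERIV_add[OF DERIV_const[of "Phi (x-1)" "at x"]] by simp
  show ?thesis
  proof (rule has_field_derivative_transform_within_open[OF G, where S="{x-1<..<x+1}"])
    show "open {x-1<..<x+1}" by simp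
    show "x \<in> {x-1<..<x+1}" by simp
    fix y :: real assume "y \<in> {x-1<..<x+1}"
    then have "x - 1 \<le> y" by simp
    then show "?G y = Phi y" using Phi_split[of "x-1" y] by simp
  qed
qed

lemma isCont_Phi: "isCont Phi x"
  using DERIV_Phi by (rule DERIV_isCont)

lemma continuous_on_Phi: "continuous_on A Phi"
  using isCont_Phi by (simp add: continuous_at_imp_continuous_on)

definition kk :: real where "kk = sqrt (pi / 2)"

lemma kk_pos: "0 < kk" unfolding kk_def by simp

lemma kk_std: "kk * std_normal_density (kk * x) = exp (- (pi * x\<^sup>2 / 4)) / 2"
proof -
  have "kk * (1 / sqrt (2 * pi)) = 1/2"
    unfolding kk_def by (simp add: real_sqrt_divide field_simps real_sqrt_mult)
  moreover have "(kk * x)\<^sup>2 / 2 = pi * x\<^sup>2 / 4"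
    unfolding kk_def by (simp add: power_mult_distrib)
  moreover have "kk * std_normal_density (kk * x) = (kk * (1 / sqrt (2 * pi))) * exp (- ((kk * x)\<^sup>2 / 2))"
    by (simp add: std_normal_density_def)
  ultimately show ?thesis using kk_pos by simp
qed



definition hh :: "real \<Rightarrow> real" where "hh x = exp (- x) / 2 - Phi (- kk * x)"

lemma std_neg: "std_normal_density (- y) = std_normal_density y"
  by (simp add: std_normal_density_def)

lemma DERIV_hh: "(hh has_real_derivative (exp (- (pi * x\<^sup>2 / 4)) - exp (- x)) / 2) (at x)"
proof -
  have p: "((\<lambda>x. Phi (- kk * x)) has_real_derivative std_normal_density (- kk * x) * (- kk)) (at x)"
    by (rule DERIV_chain2[OF DERIV_Phi]) (auto intro!: derivative_eq_intros)
  have e: "((\<lambda>x. exp (- x) / 2) has_real_derivative - exp (- x) / 2) (at x)"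
    by (auto intro!: derivative_eq_intros)
  have "(hh has_real_derivative (- exp (- x) / 2 - std_normal_density (- kk * x) * (- kk))) (at x)"
    unfolding hh_def by (rule DERIV_diff[OF e p])
  moreover have "- exp (- x) / 2 - std_normal_density (- kk * x) * (- kk) = (exp (- (pi * x\<^sup>2 / 4)) - exp (- x)) / 2"
  proof -
    have s: "std_normal_density (- kk * x) * kk = exp (- (pi * x\<^sup>2 / 4)) / 2"
      using kk_std[of x] std_neg[of "kk * x"] by (simp add: mult.commute)
    show ?thesis using s by (simp add: diff_divide_distrib)
  qed
  ultimately show ?thesis by (rule DERIV_cong)
qed

lemma hh_0: "hh 0 = 0"
  by (simp add: hh_def Phi_0)

lemma hh_lim: "(hh \<longlongrightarrow> 0) at_top"
proof -
  have "filterlim (\<lambda>y. - (kk * y)) at_bot at_top"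
    using filterlim_tendsto_pos_mult_at_top[OF tendsto_const kk_pos filterlim_ident]
    by (simp add: filterlim_uminus_at_bot)
  then have "((\<lambda>y. Phi (- kk * y)) \<longlongrightarrow> 0) at_top"
    unfolding Phi_cdf
    using filterlim_compose[OF finite_borel_measure.cdf_lim_at_bot[OF real_distribution.finite_borel_measure_M[OF SN_real_distribution]]]
    by simp
  moreover have "((\<lambda>y::real. exp (- y) / 2) \<longlongrightarrow> 0) at_top"
  proof -
    have "((\<lambda>y::real. exp (- y)) \<longlongrightarrow> 0) at_top"
      using filterlim_compose[OF exp_at_bot filterlim_uminus_at_bot_at_top] by simp
    then show ?thesis using tendsto_divide[OF _ tendsto_const, of _ 0 _ 2] by simp
  qed
  ultimately show ?thesis unfolding hh_def using tendsto_diff by fastforce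
qed

lemma hh_nonneg: "0 \<le> hh x"
proof -
  consider "x \<le> 0" | "0 \<le> x" "x \<le> 4 / pi" | "4 / pi \<le> x" by linarith
  then show ?thesis
  proof cases
    case 1
    have "hh 0 \<le> hh x"
    proof (rule DERIV_nonpos_imp_nonincreasing[OF 1])
      fix t assume t: "x \<le> t" "t \<le> 0"
      have "0 \<le> pi * t\<^sup>2" by simp
      then have "t * 4 \<le> pi * t\<^sup>2" using t by linarith
      then have "exp (- (pi * t\<^sup>2 / 4)) \<le> exp (- t)"
        by simp
      then show "\<exists>y. (hh has_real_derivative y) (at t) \<and> y \<le> 0"
        using DERIV_hh[of t] by auto
    qed
    then show ?thesis by (simp add: hh_0)
  next
    case 2
    have "hh 0 \<le> hh x"
    proof (rule DERIV_nonneg_imp_nondecreasing[OF 2(1)])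
      fix t assume t: "0 \<le> t" "t \<le> x"
      have "pi * x \<le> 4" using 2 by (simp add: field_simps)
      moreover have "pi * t \<le> pi * x" using t by (simp add: pi_gt_zero)
      ultimately have "pi * t \<le> 4" by linarith
      then have "pi * t * t \<le> 4 * t" using t by (intro mult_right_mono) auto
      then have "exp (- t) \<le> exp (- (pi * t\<^sup>2 / 4))"
        by (simp add: power2_eq_square)
      then show "\<exists>y. (hh has_real_derivative y) (at t) \<and> 0 \<le> y"
        using DERIV_hh[of t] by auto
    qed
    then show ?thesis by (simp add: hh_0)
  next
    case 3
    have ev: "eventually (\<lambda>y. hh y \<le> hh x) at_top"
    proof (rule eventually_at_top_linorderI[of x])
      fix y assume y: "x \<le> y"
      show "hh y \<le> hh x"
      proof (rule DERIV_nonpos_imp_nonincreasing[OF y])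
        fix t assume t: "x \<le> t" "t \<le> y"
        have "4 \<le> pi * x" using 3 by (simp add: field_simps)
        moreover have "pi * x \<le> pi * t" using t by (simp add: pi_gt_zero)
        ultimately have "4 \<le> pi * t" by linarith
        moreover have "0 \<le> t" using t 3 pi_gt_zero by (smt (verit) divide_nonneg_pos)
        ultimately have "4 * t \<le> pi * t * t" by (intro mult_right_mono) auto
        then have "exp (- (pi * t\<^sup>2 / 4)) \<le> exp (- t)"
          by (simp add: power2_eq_square)
        then show "\<exists>y. (hh has_real_derivative y) (at t) \<and> y \<le> 0"
          using DERIV_hh[of t] by auto
      qed
    qed
    show ?thesis
      by (rule tendsto_upperbound[OF hh_lim ev]) simp
  qed
qed

lemma Phi_tail: "Phi (- kk * x) \<le> exp (- x) / 2"
  using hh_nonneg[of x] by (simp add: hh_def)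

lemma key_ineq: assumes "-1 \<le> x" shows "(1 + x) * Phi (- kk * x) \<le> 1 / 2"
proof -
  have "(1 + x) * Phi (- kk * x) \<le> (1 + x) * (exp (- x) / 2)"
    using assms Phi_tail[of x] by (intro mult_left_mono) auto
  also have "(1 + x) * exp (- x) \<le> 1"
  proof -
    have "1 + x \<le> exp x" by simp
    then have "(1 + x) * exp (- x) \<le> exp x * exp (- x)"
      by (intro mult_right_mono) auto
    then show ?thesis by (simp add: exp_minus_inverse)
  qed
  then have "(1 + x) * (exp (- x) / 2) \<le> 1 / 2" by simp
  finally show ?thesis .
qed



lemma exp_ge_sq: fixes w :: real assumes "0 \<le> w" shows "w\<^sup>2 / 4 \<le> exp w"
proof -
  have "w / 2 \<le> exp (w / 2)" using exp_ge_add_one_self[of "w/2"] by linarith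
  then have "(w / 2)\<^sup>2 \<le> (exp (w / 2))\<^sup>2" using assms by (intro power_mono) auto
  also have "(exp (w / 2))\<^sup>2 = exp w" by (simp add: power2_eq_square exp_add[symmetric])
  finally show ?thesis by (simp add: power_divide)
qed

lemma zPhi_bound: assumes z: "0 < z" shows "z * Phi (- z) \<le> pi / z"
proof -
  define w where "w = z / kk"
  have w: "0 < w" using z kk_pos by (simp add: w_def)
  have zw: "z = kk * w" using kk_pos by (simp add: w_def)
  have "Phi (- z) \<le> exp (- w) / 2" using Phi_tail[of w] by (simp add: zw)
  then have "z * Phi (- z) \<le> z * (exp (- w) / 2)" using z by (intro mult_left_mono) auto
  also have "\<dots> = kk * w / (2 * exp w)" by (simp add: zw exp_minus field_simps)
  also have "\<dots> \<le> kk * w / (2 * (w\<^sup>2 / 4))"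
    using exp_ge_sq[of w] w kk_pos by (intro divide_left_mono mult_left_mono) auto
  also have "\<dots> = 2 * kk * kk / z" using w kk_pos by (simp add: zw power2_eq_square field_simps)
  also have "2 * kk * kk = pi" unfolding kk_def
    using real_sqrt_mult_self[of "pi/2"] by (simp only: mult.assoc) simp
  finally show ?thesis .
qed

lemma B_exists: "\<exists>z. z \<ge> 0 \<and> (\<forall>w\<ge>0. w * Phi (-w) \<le> z * Phi (-z))"
proof (cases "\<forall>w\<ge>0. w * Phi (-w) \<le> 0")
  case True
  then show ?thesis by (intro exI[of _ 0]) simp
next
  case False
  then obtain z0 where z0: "z0 \<ge> 0" "z0 * Phi (-z0) > 0" by (auto simp: not_le)
  define M where "M = max z0 (pi / (z0 * Phi (-z0)))"
  have "continuous_on {0..M} (\<lambda>w. w * Phi (-w))"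
    by (intro continuous_intros continuous_on_compose2[OF continuous_on_Phi]) auto
  moreover have "{0..M} \<noteq> {}" using z0 by (simp add: M_def)
  ultimately obtain zs where zs: "zs \<in> {0..M}" "\<forall>y\<in>{0..M}. y * Phi (-y) \<le> zs * Phi (-zs)"
    using continuous_attains_sup[of "{0..M}" "\<lambda>w. w * Phi (-w)"] by auto
  have "w * Phi (-w) \<le> zs * Phi (-zs)" if w: "w \<ge> 0" for w
  proof (cases "w \<le> M")
    case True then show ?thesis using zs w by auto
  next
    case False
    then have wM: "w > M" by simp
    have wpos: "w > 0" using wM z0 by (simp add: M_def)
    have "pi / (z0 * Phi (-z0)) < w" using wM by (simp add: M_def)
    then have "pi < w * (z0 * Phi (-z0))" using z0 by (simp add: field_simps)
    then have "pi / w < z0 * Phi (-z0)" using wpos by (simp add: field_simps)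
    then have "w * Phi (-w) < z0 * Phi (-z0)" using zPhi_bound[OF wpos] by linarith
    also have "\<dots> \<le> zs * Phi (-zs)" using zs z0 by (auto simp: M_def)
    finally show ?thesis by simp
  qed
  then show ?thesis using zs by (intro exI[of _ zs]) auto
qed

lemma B_props: "0 \<le> B_const" "\<And>w. 0 \<le> w \<Longrightarrow> w * Phi (-w) \<le> B_const * Phi (- B_const)"
  using someI_ex[OF B_exists] unfolding B_const_def by auto

lemma Phi_B: "Phi (- B_const) \<le> 1/2"
  using Phi_mono[of "- B_const" 0] B_props(1) Phi_0 by simp

text \<open>Regret bound for a site observed directly (rule probit with total scale rho).\<close>
lemma direct_bound:
  assumes rho: "0 < rho"
  shows "a * ((if a \<ge> 0 then 1 else 0) - Phi (a / rho)) \<le> rho * B_const / 2"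
proof -
  have "a * ((if a \<ge> 0 then 1 else 0) - Phi (a / rho)) = rho * (\<bar>a\<bar> / rho * Phi (- (\<bar>a\<bar> / rho)))"
    using rho by (cases "a \<ge> 0") (auto simp: Phi_neg field_simps)
  also have "\<dots> \<le> rho * (B_const * Phi (- B_const))"
    using rho B_props(2)[of "\<bar>a\<bar> / rho"] by (intro mult_left_mono) auto
  also have "\<dots> \<le> rho * (B_const * (1/2))"
    using rho B_props(1) Phi_B by (intro mult_left_mono) auto
  finally show ?thesis by simp
qed

text \<open>Regret bound for a site extrapolated from a neighbour at Lipschitz distance c.\<close>
lemma extrap_bound:
  assumes c: "0 < c" and ab: "\<bar>a - b\<bar> \<le> c"
  shows "a * ((if a \<ge> 0 then 1 else 0) - Phi (b / (c / kk))) \<le> c / 2"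
proof (cases "a \<ge> 0")
  case True
  define x where "x = b / c"
  have x: "-1 \<le> x" using ab True c by (simp add: x_def field_simps)
  have bx: "b / (c / kk) = kk * x" using c kk_pos by (simp add: x_def field_simps)
  have "Phi (b / (c / kk)) = Phi (kk * x)" by (simp only: bx)
  moreover have "1 - Phi (kk * x) = Phi (- kk * x)" using Phi_neg[of "kk * x"] by simp
  ultimately have "a * ((if a \<ge> 0 then 1 else 0) - Phi (b / (c / kk))) = a * Phi (- kk * x)"
    using True by simp
  also have "\<dots> \<le> (b + c) * Phi (- kk * x)"
    using ab Phi_nonneg by (intro mult_right_mono) auto
  also have "\<dots> = c * ((1 + x) * Phi (- kk * x))" using c by (simp add: x_def field_simps)
  also have "\<dots> \<le> c * (1/2)" using key_ineq[OF x] c by (intro mult_left_mono) auto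
  finally show ?thesis by simp
next
  case False
  define x where "x = - b / c"
  have x: "-1 \<le> x" using ab False c by (simp add: x_def field_simps)
  have bx: "b / (c / kk) = - kk * x" using c kk_pos by (simp add: x_def field_simps)
  have "Phi (b / (c / kk)) = Phi (- kk * x)" by (simp only: bx)
  then have "a * ((if a \<ge> 0 then 1 else 0) - Phi (b / (c / kk))) = (- a) * Phi (- kk * x)"
    using False by simp
  also have "\<dots> \<le> (c - b) * Phi (- kk * x)"
    using ab Phi_nonneg by (intro mult_right_mono) auto
  also have "\<dots> = c * ((1 + x) * Phi (- kk * x))" using c by (simp add: x_def field_simps)
  also have "\<dots> \<le> c * (1/2)" using key_ineq[OF x] c by (intro mult_left_mono) auto
  finally show ?thesis by simp
qed



lemma Phi_borel[measurable]: "Phi \<in> borel_measurable borel"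
  by (rule borel_measurable_mono) (auto simp: mono_def Phi_mono)

lemma nd_shift: "normal_density b s (b + - 1 * z) = normal_density 0 s z"
  "normal_density b s (b - z) = normal_density 0 s z"
  by (simp_all add: normal_density_def power2_commute)

lemma nn_integral_Phi_normal:
  assumes nu: "0 < nu" and s: "0 < s"
  shows "(\<integral>\<^sup>+u. ennreal (Phi (u / nu)) \<partial>density lborel (normal_density b s))
         = ennreal (Phi (b / sqrt (nu\<^sup>2 + s\<^sup>2)))"
proof -
  define rho where "rho = sqrt (nu\<^sup>2 + s\<^sup>2)"
  have rho: "0 < rho" using nu by (simp add: rho_def add_pos_nonneg)
  have ph: "ennreal (Phi (u / nu)) = (\<integral>\<^sup>+w. ennreal (normal_density 0 nu w) * indicator {..u} w \<partial>lborel)" for u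
    using emeasure_NN_atMost[OF nu, of 0 u] by (simp add: emeasure_density)
  have "(\<integral>\<^sup>+u. ennreal (Phi (u / nu)) \<partial>density lborel (normal_density b s))
      = (\<integral>\<^sup>+u. ennreal (normal_density b s u) * ennreal (Phi (u / nu)) \<partial>lborel)"
    by (subst nn_integral_density) auto
  also have "\<dots> = ennreal \<bar>-1\<bar> * (\<integral>\<^sup>+z. ennreal (normal_density b s (b + -1 * z)) * ennreal (Phi ((b + -1 * z) / nu)) \<partial>lborel)"
    by (subst nn_integral_real_affine[where c="-1" and t=b]) auto
  also have "\<dots> = (\<integral>\<^sup>+z. ennreal (normal_density 0 s z) *
       (\<integral>\<^sup>+v. ennreal (normal_density 0 nu (v - z)) * indicator {..b} v \<partial>lborel) \<partial>lborel)"
  proof -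
    have "(\<integral>\<^sup>+w. ennreal (normal_density 0 nu w) * indicator {..b + -1 * z} w \<partial>lborel)
        = (\<integral>\<^sup>+v. ennreal (normal_density 0 nu (v - z)) * indicator {..b} v \<partial>lborel)" for z
    proof -
      have "(\<integral>\<^sup>+w. ennreal (normal_density 0 nu w) * indicator {..b + -1 * z} w \<partial>lborel)
          = ennreal \<bar>1\<bar> * (\<integral>\<^sup>+v. ennreal (normal_density 0 nu (- z + 1 * v)) * indicator {..b + -1 * z} (- z + 1 * v) \<partial>lborel)"
        by (subst nn_integral_real_affine[where c=1 and t="-z"]) auto
      also have "\<dots> = (\<integral>\<^sup>+v. ennreal (normal_density 0 nu (v - z)) * indicator {..b} v \<partial>lborel)"
        by (auto intro!: nn_integral_cong simp: indicator_def)
      finally show ?thesis .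
    qed
    then show ?thesis by (simp add: ph nd_shift)
  qed
  also have "\<dots> = (\<integral>\<^sup>+z. \<integral>\<^sup>+v. ennreal (normal_density 0 nu (v - z) * normal_density 0 s z) * indicator {..b} v \<partial>lborel \<partial>lborel)"
    by (subst nn_integral_cmult[symmetric])
       (auto intro!: nn_integral_cong simp: ennreal_mult' mult_ac)
  also have "\<dots> = (\<integral>\<^sup>+v. \<integral>\<^sup>+z. ennreal (normal_density 0 nu (v - z) * normal_density 0 s z) * indicator {..b} v \<partial>lborel \<partial>lborel)"
    by (rule lborel_pair.Fubini') simp
  also have "\<dots> = (\<integral>\<^sup>+v. (\<integral>\<^sup>+z. ennreal (normal_density 0 nu (v - z) * normal_density 0 s z) \<partial>lborel) * indicator {..b} v \<partial>lborel)"
    by (subst nn_integral_multc) auto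
  also have "\<dots> = (\<integral>\<^sup>+v. ennreal (normal_density 0 rho v) * indicator {..b} v \<partial>lborel)"
    using conv_normal_density_zero_mean[OF nu s] unfolding rho_def by (metis (no_types))
  also have "\<dots> = emeasure (density lborel (normal_density 0 rho)) {..b}"
    by (simp add: emeasure_density)
  also have "\<dots> = ennreal (Phi (b / rho))"
    using emeasure_NN_atMost[OF rho, of 0 b] by simp
  finally show ?thesis unfolding rho_def .
qed

lemma integral_Phi_normal:
  assumes nu: "0 < nu" and s: "0 < s"
  shows "integral\<^sup>L (density lborel (normal_density b s)) (\<lambda>u. Phi (u / nu))
         = Phi (b / sqrt (nu\<^sup>2 + s\<^sup>2))"
  by (subst integral_eq_nn_integral) (auto simp: Phi_nonneg nn_integral_Phi_normal[OF nu s])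

lemma integral_gauss_component:
  fixes f :: "real \<Rightarrow> real"
  assumes j: "j \<in> I" and sig: "\<forall>i\<in>I. 0 < sig i" and f[measurable]: "f \<in> borel_measurable borel"
  shows "integral\<^sup>L (gauss_data I mu sig) (\<lambda>\<omega>. f (\<omega> j))
       = integral\<^sup>L (density lborel (normal_density (mu j) (sig j))) f"
proof -
  let ?M = "\<lambda>i. density lborel (normal_density (mu i) (sig i))"
  have d: "distr (PiM I ?M) (?M j) (\<lambda>\<omega>. \<omega> j) = ?M j"
    by (rule distr_PiM_component) (use sig j in \<open>auto intro!: prob_space_normal_density\<close>)
  have "integral\<^sup>L (?M j) f = integral\<^sup>L (distr (PiM I ?M) (?M j) (\<lambda>\<omega>. \<omega> j)) f"
    by (simp only: d)
  also have "\<dots> = integral\<^sup>L (PiM I ?M) (\<lambda>\<omega>. f (\<omega> j))"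
  proof -
    have m: "(\<lambda>\<omega>. \<omega> j) \<in> measurable (PiM I ?M) (?M j)"
      by (rule measurable_component_singleton[OF j])
    have fm: "f \<in> borel_measurable (?M j)" by simp
    show ?thesis using integral_distr[OF m fm] by simp
  qed
  finally show ?thesis unfolding gauss_data_def by simp
qed



lemma integral_T:
  assumes j: "j \<in> I" and sig: "\<forall>i\<in>I. 0 < sig i" and nu: "0 < nu"
  shows "integral\<^sup>L (gauss_data I mu sig) (\<lambda>u. Phi (u j / nu)) = Phi (mu j / sqrt (nu\<^sup>2 + (sig j)\<^sup>2))"
proof -
  have "integral\<^sup>L (gauss_data I mu sig) (\<lambda>u. Phi (u j / nu))
      = integral\<^sup>L (density lborel (normal_density (mu j) (sig j))) (\<lambda>x. Phi (x / nu))"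
    by (rule integral_gauss_component[OF j sig]) simp
  also have "\<dots> = Phi (mu j / sqrt (nu\<^sup>2 + (sig j)\<^sup>2))"
    using integral_Phi_normal[OF nu] sig j by simp
  finally show ?thesis .
qed

lemma nn_props:
  fixes X :: "nat \<Rightarrow> 'a::real_normed_vector"
  assumes A: "finite A" "A \<noteq> {}"
  shows "nn X A s \<in> A" "\<And>j'. j' \<in> A \<Longrightarrow> norm (X s - X (nn X A s)) \<le> norm (X s - X j')"
proof -
  let ?D = "(\<lambda>j. norm (X s - X j)) ` A"
  have "Min ?D \<in> ?D" using A by (intro Min_in) auto
  then obtain j where j: "j \<in> A" "norm (X s - X j) = Min ?D" by auto
  have jm: "\<forall>j'\<in>A. norm (X s - X j) \<le> norm (X s - X j')"
    using A j by (auto intro: Min_le)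
  let ?P = "\<lambda>j. j \<in> A \<and> (\<forall>j'\<in>A. norm (X s - X j) \<le> norm (X s - X j'))"
  have "?P (nn X A s)" unfolding nn_def by (rule LeastI[of ?P j]) (use j jm in auto)
  then show "nn X A s \<in> A" "\<And>j'. j' \<in> A \<Longrightarrow> norm (X s - X (nn X A s)) \<le> norm (X s - X j')"
    by auto
qed

lemma infdist_nn:
  fixes X :: "nat \<Rightarrow> 'a::real_normed_vector"
  assumes A: "finite A" "A \<noteq> {}"
  shows "infdist (X s) (X ` A) = norm (X s - X (nn X A s))"
proof (rule antisym)
  show "infdist (X s) (X ` A) \<le> norm (X s - X (nn X A s))"
    using infdist_le[of "X (nn X A s)" "X ` A" "X s"] nn_props(1)[OF A, where X=X and s=s] by (simp add: dist_norm)
  show "norm (X s - X (nn X A s)) \<le> infdist (X s) (X ` A)"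
    unfolding infdist_def using A nn_props(2)[OF A, where X=X and s=s]
    by (auto intro!: cINF_greatest simp: dist_norm)
qed



theorem theorem1:
  fixes Snum :: nat and SE SP :: "nat set" and X :: "nat \<Rightarrow> 'a::euclidean_space"
    and sig :: "nat \<Rightarrow> real" and C :: real and k :: nat and tau0 :: "'a \<Rightarrow> real"
    and Ss :: "nat set"
  assumes SE_sub: "SE \<subseteq> {1..Snum}" and SE_card: "card SE \<ge> 2"
    and SP_sub: "SP \<subseteq> {1..Snum}" and SP_ne: "SP \<noteq> {}"
    and sig_pos: "\<forall>s\<in>{1..Snum}. 0 < sig s"
    and C_pos: "C > 0"
    and A1: "C-lipschitz_on UNIV tau0"
    and A2: "inj_on X {1..Snum}"
    and k: "1 \<le> k" "k < card SE"
    and C_gt: "C > Cstar X sig SE SP k"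
    and Ss: "Ss \<in> A_k SE k" "Ss \<noteq> {}"
  shows "\<bar>(INF T\<in>half_rules Ss SP. SUP tau\<in>{tau. C-lipschitz_on UNIV tau}.
             ereal (regret X sig SP T Ss tau))
          - ereal (C / 2 * (1 / real (card SP)) *
                   (\<Sum>s\<in>SP - Ss. norm (X s - X (nn X Ss s))))\<bar>
         \<le> ereal (B_const * Max (sig ` SE) * real (min (card (SE \<inter> SP)) k) / real (card SP))"
proof -
  have finSE: "finite SE" using SE_sub finite_subset by blast
  have SsSE: "Ss \<subseteq> SE" and cardSs: "card Ss \<le> k" using Ss(1) by (auto simp: A_k_def)
  have finSs: "finite Ss" using finSE SsSE finite_subset by blast
  have finSP: "finite SP" using SP_sub finite_subset by blast
  have SPpos: "0 < card SP" using finSP SP_ne by (simp add: card_gt_0_iff)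
  have sigSs: "\<forall>i\<in>Ss. 0 < sig i" using sig_pos SsSE SE_sub by auto
  define j where "j = nn X Ss"
  have jSs: "\<And>s. j s \<in> Ss" using nn_props(1)[OF finSs Ss(2)] by (simp add: j_def)
  have jmin: "\<And>s j'. j' \<in> Ss \<Longrightarrow> norm (X s - X (j s)) \<le> norm (X s - X j')"
    using nn_props(2)[OF finSs Ss(2)] by (simp add: j_def)
  define d where "d = (\<lambda>s. norm (X s - X (j s)))"
  define sE where "sE = Max (sig ` SE)"
  have sig_le: "\<And>s. sig (j s) \<le> sE" using jSs SsSE finSE by (auto simp: sE_def intro!: Max_ge)
  have sigj: "\<And>s. 0 < sig (j s)" using sigSs jSs by auto
  have sE_pos: "0 \<le> sE" using sig_le[of 0] sigj[of 0] by linarith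
  have Cbig: "kk * sig (j s) < C * d s \<and> 0 < d s" if s: "s \<in> SP" "s \<notin> Ss" for s
  proof -
    have "j s \<noteq> s" using jSs s by metis
    moreover have "j s \<in> {1..Snum}" using jSs[of s] SsSE SE_sub by blast
    moreover have "s \<in> {1..Snum}" using s SP_sub by blast
    ultimately have "X s \<noteq> X (j s)" using A2 by (auto dest: inj_onD)
    then have dpos: "0 < d s" by (simp add: d_def)
    let ?S = "{sqrt (pi/2) * sig (nn X Ss s) / norm (X s - X (nn X Ss s)) | Ss s.
       Ss \<in> A_k SE k \<and> Ss \<noteq> {} \<and> s \<in> SP - Ss}"
    have fin: "finite ?S"
    proof (rule finite_subset)
      show "?S \<subseteq> (\<lambda>(A, t). sqrt (pi/2) * sig (nn X A t) / norm (X t - X (nn X A t))) ` (Pow SE \<times> SP)"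
        by (auto simp: A_k_def)
      show "finite ((\<lambda>(A, t). sqrt (pi/2) * sig (nn X A t) / norm (X t - X (nn X A t))) ` (Pow SE \<times> SP))"
        using finSE finSP by auto
    qed
    have "kk * sig (j s) / d s \<in> ?S"
      unfolding kk_def j_def d_def using Ss s by blast
    then have "kk * sig (j s) / d s \<le> Cstar X sig SE SP k"
      unfolding Cstar_def using fin by (intro Max_ge)
    then have "kk * sig (j s) / d s < C" using C_gt by linarith
    then show ?thesis using dpos by (simp add: divide_less_eq)
  qed
  define rho where "rho = (\<lambda>s. if s \<in> Ss then sqrt 2 * sig (j s) else C * d s / kk)"
  define nu where "nu = (\<lambda>s. if s \<in> Ss then sig (j s) else sqrt ((rho s)\<^sup>2 - (sig (j s))\<^sup>2))"
  have nu_rho: "0 < nu s \<and> sqrt ((nu s)\<^sup>2 + (sig (j s))\<^sup>2) = rho s" if s: "s \<in> SP" for s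
  proof (cases "s \<in> Ss")
    case True
    have e2: "(sig (j s))\<^sup>2 + (sig (j s))\<^sup>2 = 2 * (sig (j s))\<^sup>2" by simp
    have "sqrt ((sig (j s))\<^sup>2 + (sig (j s))\<^sup>2) = sqrt 2 * sqrt ((sig (j s))\<^sup>2)"
      unfolding e2 by (rule real_sqrt_mult)
    also have "\<dots> = sqrt 2 * sig (j s)" using sigj[of s] by simp
    finally show ?thesis using True sigj[of s] by (simp add: nu_def rho_def)
  next
    case False
    from Cbig[OF s False] have "sig (j s) < rho s" using kk_pos False
      by (simp add: rho_def pos_less_divide_eq mult.commute)
    then have "(sig (j s))\<^sup>2 < (rho s)\<^sup>2" using sigj[of s] by (intro power_strict_mono) auto
    then have pos: "0 < (rho s)\<^sup>2 - (sig (j s))\<^sup>2" by simp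
    have rpos: "0 < rho s" using \<open>sig (j s) < rho s\<close> sigj[of s] by linarith
    have "(nu s)\<^sup>2 = (rho s)\<^sup>2 - (sig (j s))\<^sup>2" using False pos by (simp add: nu_def)
    then have "sqrt ((nu s)\<^sup>2 + (sig (j s))\<^sup>2) = rho s" using rpos by simp
    moreover have "0 < nu s" using False pos by (simp add: nu_def)
    ultimately show ?thesis by simp
  qed
  define T0 where "T0 = (\<lambda>s (u::nat \<Rightarrow> real). Phi (u (j s) / nu s))"
  have intT0: "integral\<^sup>L (gauss_data Ss mu sig') (T0 s) = Phi (mu (j s) / sqrt ((nu s)\<^sup>2 + (sig' (j s))\<^sup>2))"
    if "s \<in> SP" "\<forall>i\<in>Ss. 0 < sig' i" for s mu sig'
    unfolding T0_def using integral_T[OF jSs[of s] that(2)] nu_rho[OF that(1)] by simp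
  have T0_half: "T0 \<in> half_rules Ss SP"
  proof -
    have meas: "T0 s \<in> borel_measurable (PiM Ss (\<lambda>_. borel))" for s
    proof -
      have c: "(\<lambda>u. u (j s)) \<in> measurable (PiM Ss (\<lambda>_. borel)) borel"
        by (rule measurable_component_singleton[OF jSs])
      have p: "(\<lambda>x. Phi (x / nu s)) \<in> borel_measurable borel" by measurable
      show ?thesis using measurable_compose[OF c p] by (simp add: T0_def)
    qed
    have "T0 \<in> treatment_rules Ss SP"
      unfolding treatment_rules_def using meas by (auto simp: T0_def Phi_nonneg Phi_le1)
    moreover have "integral\<^sup>L (gauss_data Ss (\<lambda>_. 0) sig') (T0 s) = 1/2"
      if "\<forall>i\<in>Ss. 0 < sig' i" "s \<in> SP" for sig' s
      using intT0[OF that(2) that(1), of "\<lambda>_. 0"] by (simp add: Phi_0)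
    ultimately show ?thesis unfolding half_rules_def by auto
  qed
  define V where "V = C / 2 * (1 / real (card SP)) * (\<Sum>s\<in>SP - Ss. norm (X s - X (nn X Ss s)))"
  define R where "R = B_const * Max (sig ` SE) * real (min (card (SE \<inter> SP)) k) / real (card SP)"
  have R_nonneg: "0 \<le> R" unfolding R_def using B_props(1) sE_pos by (simp add: sE_def)
  have upper: "regret X sig SP T0 Ss tau \<le> V + R" if L: "C-lipschitz_on UNIV tau" for tau
  proof -
    define trm where "trm = (\<lambda>s. tau (X s) * ((if tau (X s) \<ge> 0 then 1 else 0)
          - integral\<^sup>L (gauss_data Ss (\<lambda>i. tau (X i)) sig) (T0 s)))"
    have t_eq: "trm s = tau (X s) * ((if tau (X s) \<ge> 0 then 1 else 0) - Phi (tau (X (j s)) / rho s))"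
      if "s \<in> SP" for s
      using intT0[OF that sigSs, of "\<lambda>i. tau (X i)"] nu_rho[OF that] by (simp add: trm_def)
    have t1: "trm s \<le> B_const * sE" if s: "s \<in> SP \<inter> Ss" for s
    proof -
      have "norm (X s - X (j s)) \<le> 0" using jmin[of s s] s by simp
      then have "X (j s) = X s" by simp
      then have "trm s = tau (X s) * ((if tau (X s) \<ge> 0 then 1 else 0) - Phi (tau (X s) / rho s))"
        using t_eq[of s] s by simp
      also have "\<dots> \<le> rho s * B_const / 2"
        using direct_bound[of "rho s" "tau (X s)"] s sigj[of s] by (simp add: rho_def)
      also have "rho s * B_const / 2 = sqrt 2 / 2 * (sig (j s) * B_const)"
        using s by (simp add: rho_def)
      also have "\<dots> \<le> 1 * (sig (j s) * B_const)"
        using sqrt2_less_2 sigj[of s] B_props(1) by (intro mult_right_mono) auto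
      also have "\<dots> \<le> B_const * sE" using sig_le[of s] B_props(1) by (simp add: mult.commute mult_left_mono)
      finally show ?thesis .
    qed
    have t2: "trm s \<le> C * d s / 2" if s: "s \<in> SP - Ss" for s
    proof -
      have cp: "0 < C * d s" using Cbig[of s] s C_pos by auto
      have "dist (tau (X s)) (tau (X (j s))) \<le> C * dist (X s) (X (j s))"
        using lipschitz_onD[OF L] by simp
      then have ab: "\<bar>tau (X s) - tau (X (j s))\<bar> \<le> C * d s" by (simp add: dist_real_def dist_norm d_def)
      have "trm s = tau (X s) * ((if tau (X s) \<ge> 0 then 1 else 0) - Phi (tau (X (j s)) / (C * d s / kk)))"
        using t_eq[of s] s by (simp add: rho_def)
      also have "\<dots> \<le> C * d s / 2" by (rule extrap_bound[OF cp ab])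
      finally show ?thesis .
    qed
    have "(\<Sum>s\<in>SP. trm s) = (\<Sum>s\<in>SP \<inter> Ss. trm s) + (\<Sum>s\<in>SP - Ss. trm s)"
      using finSP by (rule sum.Int_Diff)
    also have "(\<Sum>s\<in>SP \<inter> Ss. trm s) \<le> real (card (SP \<inter> Ss)) * (B_const * sE)"
      using t1 by (rule sum_bounded_above)
    also have "\<dots> \<le> real (min (card (SE \<inter> SP)) k) * (B_const * sE)"
    proof -
      have "card (SP \<inter> Ss) \<le> card (SE \<inter> SP)" using finSE SsSE by (intro card_mono) auto
      moreover have "card (SP \<inter> Ss) \<le> k" using cardSs card_mono[OF finSs, of "SP \<inter> Ss"] by auto
      ultimately show ?thesis using B_props(1) sE_pos by (intro mult_right_mono) auto
    qed
    also have "(\<Sum>s\<in>SP - Ss. trm s) \<le> (\<Sum>s\<in>SP - Ss. C * d s / 2)"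
      using t2 by (rule sum_mono)
    finally have sum_le: "(\<Sum>s\<in>SP. trm s) \<le> real (min (card (SE \<inter> SP)) k) * (B_const * sE) + (\<Sum>s\<in>SP - Ss. C * d s / 2)"
      by simp
    have "regret X sig SP T0 Ss tau = (1 / real (card SP)) * (\<Sum>s\<in>SP. trm s)"
      by (simp add: regret_def trm_def)
    also have "\<dots> \<le> (1 / real (card SP)) * (real (min (card (SE \<inter> SP)) k) * (B_const * sE) + (\<Sum>s\<in>SP - Ss. C * d s / 2))"
      using sum_le SPpos by (intro mult_left_mono) auto
    also have "\<dots> = V + R"
      using SPpos by (simp add: V_def R_def sE_def d_def j_def sum_distrib_left[symmetric] sum_divide_distrib[symmetric] field_simps)
    finally show ?thesis .
  qed
  define taus where "taus = (\<lambda>x. C * infdist x (X ` Ss))"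
  have taus_L: "C-lipschitz_on UNIV taus"
  proof (rule lipschitz_onI)
    fix x y :: 'a
    have "dist (taus x) (taus y) = C * \<bar>infdist x (X ` Ss) - infdist y (X ` Ss)\<bar>"
      using C_pos by (simp add: taus_def dist_real_def abs_mult right_diff_distrib[symmetric])
    also have "\<dots> \<le> C * dist x y" using C_pos infdist_triangle_abs by (intro mult_left_mono) auto
    finally show "dist (taus x) (taus y) \<le> C * dist x y" .
  qed (use C_pos in simp)
  have lower: "ereal V \<le> (SUP tau\<in>{tau. C-lipschitz_on UNIV tau}. ereal (regret X sig SP T Ss tau))"
    if T: "T \<in> half_rules Ss SP" for T
  proof -
    have g: "gauss_data Ss (\<lambda>i. taus (X i)) sig = gauss_data Ss (\<lambda>_. 0) sig"
      unfolding gauss_data_def by (rule PiM_cong) (auto simp: taus_def)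
    have half: "integral\<^sup>L (gauss_data Ss (\<lambda>i. taus (X i)) sig) (T s) = 1/2" if "s \<in> SP" for s
      using T sigSs that unfolding g half_rules_def by auto
    have tn: "0 \<le> taus x" for x using C_pos by (simp add: taus_def infdist_nonneg)
    have "regret X sig SP T Ss taus = (1 / real (card SP)) * (\<Sum>s\<in>SP. taus (X s) / 2)"
      unfolding regret_def using half tn by (intro arg_cong[where f="\<lambda>x. _ * x"] sum.cong) auto
    also have "(\<Sum>s\<in>SP. taus (X s) / 2) = (\<Sum>s\<in>SP \<inter> Ss. taus (X s) / 2) + (\<Sum>s\<in>SP - Ss. taus (X s) / 2)"
      using finSP by (rule sum.Int_Diff)
    also have "(\<Sum>s\<in>SP \<inter> Ss. taus (X s) / 2) = 0"
      by (intro sum.neutral) (auto simp: taus_def)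
    also have "(\<Sum>s\<in>SP - Ss. taus (X s) / 2) = C / 2 * (\<Sum>s\<in>SP - Ss. norm (X s - X (nn X Ss s)))"
      by (simp add: taus_def infdist_nn[OF finSs Ss(2)] sum_distrib_left)
    finally have "regret X sig SP T Ss taus = V" by (simp add: V_def)
    then show ?thesis using taus_L by (intro SUP_upper2[of taus]) auto
  qed
  let ?I = "INF T\<in>half_rules Ss SP. SUP tau\<in>{tau. C-lipschitz_on UNIV tau}. ereal (regret X sig SP T Ss tau)"
  have I_ge: "ereal V \<le> ?I" using lower by (intro INF_greatest)
  have I_le: "?I \<le> ereal (V + R)"
    using T0_half upper by (intro INF_lower2[OF T0_half] SUP_least) auto
  from I_ge I_le obtain x where x: "?I = ereal x" "V \<le> x" "x \<le> V + R"
    by (cases ?I) auto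
  have "\<bar>?I - ereal V\<bar> = ereal \<bar>x - V\<bar>" using x by simp
  also have "\<dots> \<le> ereal R" using x by simp
  finally show ?thesis by (simp add: V_def R_def)
qed

end
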